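(* Let $m=p_1^{m_1}\cdots p_k^{m_k}$ and let $(K_n,\alpha)$ be an edge-labeled complete graph over $\mathbb{Z}/m\mathbb{Z}$ with ordered edge labels $a_1,\dots,a_{r_n}$, each a positive divisor of $m$ representing a zero divisor of $\mathbb{Z}/m\mathbb{Z}$. (1) Suppose $a_{r_n}\mid a_{r_n-1}\mid\cdots\mid a_1\mid m$ and $m\ne a_1$. Let $H$ be a spanning subgraph of $K_n$ that is either the wheel with hub $v_1$ (i.e. $v_1$ is adjacent to all other vertices and $v_2,\dots,v_n$ form a cycle) or the star with central vertex $v_1$, with edge labels inherited from $(K_n,\alpha)$. Then the set consisting of $(1,\dots,1)$ and, for $j=2,\dots,n$, the vector with $a_{r_{j-1}+1}$ at $v_j$ and $0$ elsewhere, which is a minimum flow-up generating set of $[\mathbb{Z}/m\mathbb{Z}]_{(K_n,\alpha)}$, is also a minimum flow-up generating set of $[\mathbb{Z}/m\mathbb{Z}]_{(H,\alpha)}$. (2) Suppose $a_1\mid a_2\mid\cdots\mid a_{r_n}\mid m$ and $m\ne a_{r_n}$. Let $H$ be a spanning subgraph of $K_n$ that is either the wheel with hub $v_n$ or the star with central vertex $v_n$, with inherited edge labels. Then the set consisting of $(1,\dots,1)$ and, for $j=2,\dots,n$, the vector with entries $a_{r_n-(n-j)}$ at $v_j,\dots,v_n$ and $0$ at $v_1,\dots,v_{j-1}$, which is a minimum flow-up generating set of $[\mathbb{Z}/m\mathbb{Z}]_{(K_n,\alpha)}$, is also a minimum flow-up generating set of $[\mathbb{Z}/m\mathbb{Z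}]_{(H,\alpha)}$.
   Context: A spline on an edge-labeled graph $(G,\alpha)$ over $\mathbb{Z}/m\mathbb{Z}$ (edges labeled by nonzero ideals) is a vector $(f_{v_1},\dots,f_{v_n})\in(\mathbb{Z}/m\mathbb{Z})^n$ with $f_{v_i}-f_{v_j}\in\alpha(v_iv_j)$ for every edge; the splines form a $\mathbb{Z}$-module $[\mathbb{Z}/m\mathbb{Z}]_{(G,\alpha)}$. An $i$-th flow-up class is a spline with $f_{v_i}\ne0$ and $f_{v_t}=0$ for $t<i$. A minimum flow-up generating set is a generating set of the $\mathbb{Z}$-module of smallest possible size consisting of flow-up classes. $K_n$ is the complete graph on $v_1,\dots,v_n$; $r_k=k(k-1)/2$; for $1\le j<k\le n$ the edge $v_jv_k$ is $e_{r_{k-1}+j}$. "Ordered edge labels $a_1,\dots,a_{r_n}$" means $\alpha(e_s)$ is the ideal generated by $a_s+m\mathbb{Z}$. *)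

theory Defs
  imports "HOL-Number_Theory.Cong"
begin

text \<open>Vertices of K_n are the naturals 1..n. Elements of Z/mZ are represented by
  their canonical residues in {0..<m} (as integers). A vector in (Z/mZ)^n is a
  function nat => int that vanishes outside {1..n}. Edges are pairs (j,k) with j < k.\<close>

definition r :: "nat \<Rightarrow> nat" where
  "r k = k * (k - 1) div 2"

text \<open>The edge v_j v_k (j < k) is e_(r_(k-1)+j).\<close>
definition edge_index :: "nat \<Rightarrow> nat \<Rightarrow> nat" where
  "edge_index j k = r (k - 1) + j"

definition complete_edges :: "nat \<Rightarrow> (nat \<times> nat) set" where
  "complete_edges n = {(j, k). 1 \<le> j \<and> j < k \<and> k \<le> n}"

definition wheel_hub_first :: "nat \<Rightarrow> (nat \<times> nat) set" where
  "wheel_hub_first n = {(j, k). 1 \<le> j \<and> j < k \<and> k \<le> n \<and>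
      (j = 1 \<or> k = j + 1 \<or> (j = 2 \<and> k = n))}"

definition star_hub_first :: "nat \<Rightarrow> (nat \<times> nat) set" where
  "star_hub_first n = {(j, k). j = 1 \<and> j < k \<and> k \<le> n}"

definition wheel_hub_last :: "nat \<Rightarrow> (nat \<times> nat) set" where
  "wheel_hub_last n = {(j, k). 1 \<le> j \<and> j < k \<and> k \<le> n \<and>
      (k = n \<or> k = j + 1 \<or> (j = 1 \<and> k = n - 1))}"

definition star_hub_last :: "nat \<Rightarrow> (nat \<times> nat) set" where
  "star_hub_last n = {(j, k). 1 \<le> j \<and> j < k \<and> k = n}"

text \<open>Splines on (G, alpha) over Z/mZ, where the edge (j,k) is labelled by the ideal
  generated by a_(edge_index j k) + mZ.\<close>
definition splines :: "int \<Rightarrow> nat \<Rightarrow> (nat \<times> nat) set \<Rightarrow> (nat \<Rightarrow> int) \<Rightarrow> (nat \<Rightarrow> int) set" where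
  "splines m n E a = {f.
      (\<forall>i. i \<notin> {1..n} \<longrightarrow> f i = 0) \<and>
      (\<forall>i\<in>{1..n}. 0 \<le> f i \<and> f i < m) \<and>
      (\<forall>(j, k)\<in>E. \<exists>c. [f j - f k = c * a (edge_index j k)] (mod m))}"

definition generates :: "int \<Rightarrow> nat \<Rightarrow> (nat \<Rightarrow> int) set \<Rightarrow> (nat \<Rightarrow> int) set \<Rightarrow> bool" where
  "generates m n S B \<longleftrightarrow> B \<subseteq> S \<and>
     (\<forall>f\<in>S. \<exists>B' c. B' \<subseteq> B \<and> finite B' \<and>
        (\<forall>i\<in>{1..n}. [f i = (\<Sum>g\<in>B'. c g * g i)] (mod m)))"

definition flow_up_class :: "int \<Rightarrow> nat \<Rightarrow> (nat \<times> nat) set \<Rightarrow> (nat \<Rightarrow> int) \<Rightarrow> (nat \<Rightarrow> int) \<Rightarrow> bool" where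
  "flow_up_class m n E a f \<longleftrightarrow> f \<in> splines m n E a \<and>
     (\<exists>i\<in>{1..n}. f i \<noteq> 0 \<and> (\<forall>t\<in>{1..<i}. f t = 0))"

definition flow_up_generating_set :: "int \<Rightarrow> nat \<Rightarrow> (nat \<times> nat) set \<Rightarrow> (nat \<Rightarrow> int) \<Rightarrow> (nat \<Rightarrow> int) set \<Rightarrow> bool" where
  "flow_up_generating_set m n E a B \<longleftrightarrow>
     generates m n (splines m n E a) B \<and> (\<forall>f\<in>B. flow_up_class m n E a f)"

definition min_flow_up_generating_set :: "int \<Rightarrow> nat \<Rightarrow> (nat \<times> nat) set \<Rightarrow> (nat \<Rightarrow> int) \<Rightarrow> (nat \<Rightarrow> int) set \<Rightarrow> bool" where
  "min_flow_up_generating_set m n E a B \<longleftrightarrow>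
     flow_up_generating_set m n E a B \<and> finite B \<and>
     (\<forall>B'. flow_up_generating_set m n E a B' \<longrightarrow> card B \<le> card B')"

end

theory Submission
  imports Defs "HOL-Library.FuncSet"
begin


definition Phi :: "(nat \<Rightarrow> int) \<Rightarrow> (nat \<Rightarrow> nat) \<Rightarrow> (nat \<Rightarrow> int) \<Rightarrow> nat \<Rightarrow> int" where
  "Phi b p f j = (if j = 1 then f 1 else (f j - f (p j)) div b j)"

lemma splines_finite: "finite (splines m n E a)"
proof -
  have "splines m n E a \<subseteq> (\<lambda>g i. if i \<in> {1..n} then g i else 0) ` ({1..n} \<rightarrow>\<^sub>E {0..<m})"
  proof
    fix f assume f: "f \<in> splines m n E a"
    have "f = (\<lambda>i. if i \<in> {1..n} then restrict f {1..n} i else 0)"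
      using f unfolding splines_def by auto
    moreover have "restrict f {1..n} \<in> {1..n} \<rightarrow>\<^sub>E {0..<m}" using f unfolding splines_def by auto
    ultimately show "f \<in> (\<lambda>g i. if i \<in> {1..n} then g i else 0) ` ({1..n} \<rightarrow>\<^sub>E {0..<m})" by blast
  qed
  then show ?thesis by (rule finite_subset) (simp add: finite_PiE)
qed

lemma comb_image:
  fixes c :: "'x \<Rightarrow> int" and G :: "'x \<Rightarrow> nat \<Rightarrow> int"
  assumes "finite I"
  shows "(\<Sum>k\<in>I. c k * G k i) = (\<Sum>g\<in>G ` I. (\<Sum>k\<in>{k\<in>I. G k = g}. c k) * g i)"
proof -
  have "(\<Sum>k\<in>I. c k * G k i) = (\<Sum>g\<in>G ` I. \<Sum>k\<in>{k\<in>I. G k = g}. c k * G k i)"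
    by (rule sum.image_gen[OF assms])
  also have "\<dots> = (\<Sum>g\<in>G ` I. (\<Sum>k\<in>{k\<in>I. G k = g}. c k) * g i)"
  proof (rule sum.cong)
    fix g assume "g \<in> G ` I"
    have "(\<Sum>k\<in>{k\<in>I. G k = g}. c k * G k i) = (\<Sum>k\<in>{k\<in>I. G k = g}. c k * g i)"
      by (rule sum.cong) auto
    moreover have "(\<Sum>k\<in>{k\<in>I. G k = g}. c k) * g i = (\<Sum>k\<in>{k\<in>I. G k = g}. c k * g i)"
      by (rule sum_distrib_right)
    ultimately show "(\<Sum>k\<in>{k\<in>I. G k = g}. c k * G k i) = (\<Sum>k\<in>{k\<in>I. G k = g}. c k) * g i"
      by simp
  qed simp
  finally show ?thesis .
qed

lemma cong_dvd_lemma: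
  fixes x c d m :: int
  assumes "[x = c * d] (mod m)" "d dvd m"
  shows "d dvd x"
proof -
  have "m dvd x - c * d" using assms(1) by (simp add: cong_iff_dvd_diff)
  then have "d dvd x - c * d" using assms(2) dvd_trans by blast
  then show ?thesis by (metis dvd_add dvd_triv_right diff_add_cancel)
qed

lemma dvd_cong_ex: "(d::int) dvd x \<Longrightarrow> \<exists>c. [x = c * d] (mod m)"
  by (metis dvd_def mult.commute cong_refl)

lemma splines_anti: "E \<subseteq> E' \<Longrightarrow> splines m n E' a \<subseteq> splines m n E a"
  unfolding splines_def by auto

lemma spline_comb:
  fixes m :: int
  assumes fin: "finite I" and G: "\<forall>x\<in>I. G x \<in> splines m n E a" and m0: "m > 0"
  shows "(\<lambda>i. if i \<in> {1..n} then (\<Sum>x\<in>I. c x * G x i) mod m else 0) \<in> splines m n E a"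
    (is "?F \<in> _")
proof -
  have Fc: "[?F i = (\<Sum>x\<in>I. c x * G x i)] (mod m)" for i
  proof (cases "i \<in> {1..n}")
    case True then show ?thesis by simp
  next
    case False
    then have "\<forall>x\<in>I. G x i = 0" using G unfolding splines_def by auto
    then show ?thesis using False by simp
  qed
  have edge: "\<exists>cc. [?F j - ?F k = cc * a (edge_index j k)] (mod m)" if jk: "(j, k) \<in> E" for j k
  proof -
    have "\<forall>x\<in>I. \<exists>cc. [G x j - G x k = cc * a (edge_index j k)] (mod m)"
      using G jk unfolding splines_def by fastforce
    then obtain C where C: "\<forall>x\<in>I. [G x j - G x k = C x * a (edge_index j k)] (mod m)"
      by metis
    have "[?F j - ?F k = (\<Sum>x\<in>I. c x * G x j) - (\<Sum>x\<in>I. c x * G x k)] (mod m)"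
      by (intro cong_diff Fc)
    also have "(\<Sum>x\<in>I. c x * G x j) - (\<Sum>x\<in>I. c x * G x k) = (\<Sum>x\<in>I. c x * (G x j - G x k))"
      by (simp add: sum_subtractf right_diff_distrib)
    also have "[\<dots> = (\<Sum>x\<in>I. c x * (C x * a (edge_index j k)))] (mod m)"
      by (rule cong_sum) (use C in \<open>auto intro: cong_mult\<close>)
    also have "(\<Sum>x\<in>I. c x * (C x * a (edge_index j k))) = (\<Sum>x\<in>I. c x * C x) * a (edge_index j k)"
      by (simp add: sum_distrib_right mult.assoc)
    finally show ?thesis by blast
  qed
  show ?thesis unfolding splines_def mem_Collect_eq
  proof (intro conjI)
    show "\<forall>i. i \<notin> {1..n} \<longrightarrow> ?F i = 0" by simp
    show "\<forall>i\<in>{1..n}. 0 \<le> ?F i \<and> ?F i < m" using m0 by simp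
    show "\<forall>(j, k)\<in>E. \<exists>cc. [?F j - ?F k = cc * a (edge_index j k)] (mod m)"
      using edge by fast
  qed
qed

lemma lin_Phi:
  fixes m q :: int
  assumes bq: "\<forall>j\<in>{2..n}. 0 < b j \<and> b j dvd m \<and> q dvd m div b j \<and> p j \<in> {1..n}" and qm: "q dvd m"
    and D: "\<forall>g\<in>S. \<forall>j\<in>{2..n}. b j dvd g j - g (p j)"
    and f: "f \<in> S" and fin: "finite I" and G: "\<forall>x\<in>I. G x \<in> S"
    and comb: "\<forall>i\<in>{1..n}. [f i = (\<Sum>x\<in>I. c x * G x i)] (mod m)" and j: "j \<in> {1..n}"
  shows "[Phi b p f j = (\<Sum>x\<in>I. c x * Phi b p (G x) j)] (mod q)"
proof (cases "j = 1")
  case True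
  have "[f 1 = (\<Sum>x\<in>I. c x * G x 1)] (mod m)" using comb j True by auto
  then show ?thesis using qm True by (simp add: Phi_def cong_dvd_modulus)
next
  case False
  then have j2: "j \<in> {2..n}" using j by auto
  define pj where "pj = p j"
  define bj where "bj = b j"
  have b0: "bj > 0" and bm: "bj dvd m" and qb: "q dvd m div bj" and pj: "pj \<in> {1..n}"
    using bq j2 by (auto simp: bj_def pj_def)
  have c1: "[f j - f pj = (\<Sum>x\<in>I. c x * G x j) - (\<Sum>x\<in>I. c x * G x pj)] (mod m)"
    using comb j pj by (intro cong_diff) auto
  obtain X where X: "f j - f pj = bj * X" using D f j2 unfolding bj_def pj_def by (meson dvdE)
  define Y where "Y x = (G x j - G x pj) div bj" for x
  have Yx: "G x j - G x pj = bj * Y x" if "x \<in> I" for x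
    using D G that j2 unfolding Y_def bj_def pj_def by simp
  have "(\<Sum>x\<in>I. c x * G x j) - (\<Sum>x\<in>I. c x * G x pj) = (\<Sum>x\<in>I. c x * (G x j - G x pj))"
    by (simp add: sum_subtractf right_diff_distrib)
  also have "\<dots> = bj * (\<Sum>x\<in>I. c x * Y x)"
    by (simp add: sum_distrib_left Yx mult.left_commute cong: sum.cong)
  finally have "[bj * X = bj * (\<Sum>x\<in>I. c x * Y x)] (mod m)" using c1 X by simp
  then have "m dvd bj * (X - (\<Sum>x\<in>I. c x * Y x))" by (simp add: cong_iff_dvd_diff right_diff_distrib)
  moreover have "m = bj * (m div bj)" using bm by simp
  ultimately have "bj * (m div bj) dvd bj * (X - (\<Sum>x\<in>I. c x * Y x))" by simp
  then have "(m div bj) dvd (X - (\<Sum>x\<in>I. c x * Y x))" using b0 by simp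
  then have "q dvd (X - (\<Sum>x\<in>I. c x * Y x))" using qb dvd_trans by blast
  then have "[X = (\<Sum>x\<in>I. c x * Y x)] (mod q)" by (simp add: cong_iff_dvd_diff)
  moreover have "Phi b p f j = X" using X b0 False unfolding Phi_def bj_def pj_def by simp
  moreover have "Phi b p (G x) j = Y x" for x using False unfolding Phi_def Y_def bj_def pj_def by simp
  ultimately show ?thesis by simp
qed


lemma count_lemma:
  fixes q m :: int and Ph :: "(nat \<Rightarrow> int) \<Rightarrow> nat \<Rightarrow> int"
  assumes q2: "q \<ge> 2" and fin: "finite B'" and sub: "B' \<subseteq> S"
    and gen: "\<forall>f\<in>S. \<exists>B'' c. B'' \<subseteq> B' \<and> finite B'' \<and> (\<forall>i\<in>{1..n}. [f i = (\<Sum>g\<in>B''. c g * g i)] (mod m))"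
    and lin: "\<And>f I c j. f \<in> S \<Longrightarrow> finite I \<Longrightarrow> I \<subseteq> S \<Longrightarrow>
        (\<forall>i\<in>{1..n}. [f i = (\<Sum>g\<in>I. c g * g i)] (mod m)) \<Longrightarrow> j \<in> {1..n} \<Longrightarrow>
        [Ph f j = (\<Sum>g\<in>I. c g * Ph g j)] (mod q)"
    and surj: "\<forall>v\<in>{1..n} \<rightarrow>\<^sub>E {0..<q}. \<exists>f\<in>S. \<forall>j\<in>{1..n}. Ph f j mod q = v j"
  shows "n \<le> card B'"
proof -
  define \<Gamma> where "\<Gamma> d = restrict (\<lambda>j. (\<Sum>g\<in>B'. d g * Ph g j) mod q) {1..n}" for d
  have incl: "{1..n} \<rightarrow>\<^sub>E {0..<q} \<subseteq> \<Gamma> ` (B' \<rightarrow>\<^sub>E {0..<q})"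
  proof
    fix v assume v: "v \<in> {1..n} \<rightarrow>\<^sub>E {0..<q}"
    obtain f where f: "f \<in> S" "\<forall>j\<in>{1..n}. Ph f j mod q = v j" using surj v by blast
    obtain B'' c where B'': "B'' \<subseteq> B'" "finite B''" "\<forall>i\<in>{1..n}. [f i = (\<Sum>g\<in>B''. c g * g i)] (mod m)"
      using gen f(1) by blast
    define d where "d = restrict (\<lambda>g. (if g \<in> B'' then c g else 0) mod q) B'"
    have d: "d \<in> B' \<rightarrow>\<^sub>E {0..<q}" using q2 by (auto simp: d_def)
    have "\<Gamma> d = v"
    proof (rule ext)
      fix j show "\<Gamma> d j = v j"
      proof (cases "j \<in> {1..n}")
        case False then show ?thesis using v by (auto simp: \<Gamma>_def PiE_def extensional_def)
      next
        case True
        have l: "[Ph f j = (\<Sum>g\<in>B''. c g * Ph g j)] (mod q)"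
          using lin[of f B'' c j] f(1) B'' sub True by blast
        have "[(\<Sum>g\<in>B'. d g * Ph g j) = (\<Sum>g\<in>B'. (if g \<in> B'' then c g else 0) * Ph g j)] (mod q)"
          by (rule cong_sum) (auto simp: d_def intro: cong_mult)
        also have "(\<Sum>g\<in>B'. (if g \<in> B'' then c g else 0) * Ph g j) = (\<Sum>g\<in>B'. if g \<in> B'' then c g * Ph g j else 0)"
          by (rule sum.cong) auto
        also have "\<dots> = (\<Sum>g\<in>{g\<in>B'. g \<in> B''}. c g * Ph g j)"
          using fin by (simp add: sum.inter_filter)
        also have "{g\<in>B'. g \<in> B''} = B''" using B'' by auto
        finally have "[(\<Sum>g\<in>B'. d g * Ph g j) = Ph f j] (mod q)" using l by (metis cong_sym cong_trans)
        then have "(\<Sum>g\<in>B'. d g * Ph g j) mod q = v j" using f(2) True by (simp add: cong_def)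
        then show ?thesis using True by (simp add: \<Gamma>_def)
      qed
    qed
    then show "v \<in> \<Gamma> ` (B' \<rightarrow>\<^sub>E {0..<q})" using d by blast
  qed
  have "nat q ^ n = card ({1..n} \<rightarrow>\<^sub>E {0..<q})" by (simp add: card_PiE)
  also have "\<dots> \<le> card (\<Gamma> ` (B' \<rightarrow>\<^sub>E {0..<q}))"
    using incl by (rule card_mono[rotated]) (simp add: fin finite_PiE)
  also have "\<dots> \<le> card (B' \<rightarrow>\<^sub>E {0..<q})" by (rule card_image_le) (simp add: fin finite_PiE)
  also have "\<dots> = nat q ^ card B'" using fin by (simp add: card_PiE)
  finally have pw: "nat q ^ n \<le> nat q ^ card B'" .
  have q1: "1 < nat q" using q2 by simp
  show ?thesis using power_le_imp_le_exp[OF q1 pw] .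
qed

lemma generic_min:
  fixes m q :: int
  assumes m1: "m > 1" and q2: "q \<ge> 2" and qm: "q dvd m"
    and bq: "\<forall>j\<in>{2..n}. 0 < b j \<and> b j dvd m \<and> q dvd m div b j \<and> p j \<in> {1..n}"
    and genS: "\<forall>k\<in>{1..n}. gen k \<in> splines m n E a"
    and D: "\<forall>g\<in>splines m n E a. \<forall>j\<in>{2..n}. b j dvd g j - g (p j)"
    and delta: "\<forall>k\<in>{1..n}. \<forall>j\<in>{1..n}. Phi b p (gen k) j = (if j = k then 1 else 0)"
    and span: "\<forall>f\<in>splines m n E a. \<exists>coef. \<forall>i\<in>{1..n}. f i = (\<Sum>k\<in>{1..n}. coef k * gen k i)"
    and flow: "\<forall>k\<in>{1..n}. flow_up_class m n E a (gen k)"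
  shows "min_flow_up_generating_set m n E a (gen ` {1..n})"
proof -
  let ?S = "splines m n E a"
  have BS: "gen ` {1..n} \<subseteq> ?S" using genS by auto
  have genr: "generates m n ?S (gen ` {1..n})"
    unfolding generates_def
  proof (intro conjI ballI BS)
    fix f assume f: "f \<in> ?S"
    obtain coef where coef: "\<forall>i\<in>{1..n}. f i = (\<Sum>k\<in>{1..n}. coef k * gen k i)" using span f by blast
    define c where "c g = (\<Sum>k\<in>{k\<in>{1..n}. gen k = g}. coef k)" for g
    have "\<forall>i\<in>{1..n}. [f i = (\<Sum>g\<in>gen ` {1..n}. c g * g i)] (mod m)"
      using coef comb_image[of "{1..n}" coef gen] unfolding c_def by simp
    then show "\<exists>B' c. B' \<subseteq> gen ` {1..n} \<and> finite B' \<and> (\<forall>i\<in>{1..n}. [f i = (\<Sum>g\<in>B'. c g * g i)] (mod m))"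
      by blast
  qed
  have fl: "flow_up_generating_set m n E a (gen ` {1..n})"
    unfolding flow_up_generating_set_def using genr flow by auto
  have mn: "card B \<ge> n" if B: "flow_up_generating_set m n E a B" for B
  proof -
    have Bsub: "B \<subseteq> ?S" using B unfolding flow_up_generating_set_def generates_def by blast
    have finB: "finite B" using Bsub splines_finite finite_subset by blast
    show ?thesis
    proof (rule count_lemma[where Ph = "Phi b p" and q = q and m = m and S = ?S])
      show "q \<ge> 2" by (rule q2)
      show "finite B" by (rule finB)
      show "B \<subseteq> ?S" by (rule Bsub)
      show "\<forall>f\<in>?S. \<exists>B'' c. B'' \<subseteq> B \<and> finite B'' \<and> (\<forall>i\<in>{1..n}. [f i = (\<Sum>g\<in>B''. c g * g i)] (mod m))"
        using B unfolding flow_up_generating_set_def generates_def by blast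
      show "[Phi b p f j = (\<Sum>g\<in>I. c g * Phi b p g j)] (mod q)"
        if "f \<in> ?S" "finite I" "I \<subseteq> ?S" "\<forall>i\<in>{1..n}. [f i = (\<Sum>g\<in>I. c g * g i)] (mod m)" "j \<in> {1..n}"
        for f I c j
        using lin_Phi[OF bq qm D, of f I "\<lambda>g. g" c j] that by auto
      show "\<forall>v\<in>{1..n} \<rightarrow>\<^sub>E {0..<q}. \<exists>f\<in>?S. \<forall>j\<in>{1..n}. Phi b p f j mod q = v j"
      proof
        fix v assume v: "v \<in> {1..n} \<rightarrow>\<^sub>E {0..<q}"
        define f where "f = (\<lambda>i. if i \<in> {1..n} then (\<Sum>k\<in>{1..n}. v k * gen k i) mod m else 0)"
        have fS: "f \<in> ?S" unfolding f_def using genS m1 by (intro spline_comb) auto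
        have fc: "\<forall>i\<in>{1..n}. [f i = (\<Sum>k\<in>{1..n}. v k * gen k i)] (mod m)" by (simp add: f_def)
        have "Phi b p f j mod q = v j" if j: "j \<in> {1..n}" for j
        proof -
          have "[Phi b p f j = (\<Sum>k\<in>{1..n}. v k * Phi b p (gen k) j)] (mod q)"
            using lin_Phi[OF bq qm D fS _ _ fc j] genS by auto
          also have "(\<Sum>k\<in>{1..n}. v k * Phi b p (gen k) j) = (\<Sum>k\<in>{1..n}. if j = k then v k else 0)"
            using delta j by (intro sum.cong) auto
          also have "\<dots> = v j" using j by simp
          finally show ?thesis using v j by (auto simp: cong_def PiE_def Pi_def)
        qed
        then show "\<exists>f\<in>?S. \<forall>j\<in>{1..n}. Phi b p f j mod q = v j" using fS by blast
      qed
    qed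
  qed
  have "card (gen ` {1..n}) \<le> n" using card_image_le[of "{1..n}" gen] by simp
  then show ?thesis unfolding min_flow_up_generating_set_def using fl mn by fastforce
qed



lemma r_Suc: "r (Suc k) = r k + k"
proof -
  have "Suc k * k = k * (k - 1) + 2 * k" by (cases k) (auto simp: algebra_simps)
  then show ?thesis unfolding r_def by simp
qed

lemma r_mono: "i \<le> j \<Longrightarrow> r i \<le> r j"
  by (induction j rule: dec_induct) (auto simp: r_Suc)

lemma r_pred: "k \<ge> 1 \<Longrightarrow> r k = r (k - 1) + (k - 1)"
  using r_Suc[of "k - 1"] by simp

lemma idx_bound: "1 \<le> j \<Longrightarrow> j < k \<Longrightarrow> k \<le> n \<Longrightarrow> r (k - 1) + j \<le> r n"
  using r_pred[of k] r_mono[of k n] by auto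

lemma r2: "n \<ge> 2 \<Longrightarrow> r n \<ge> 1"
  using r_mono[of 2 n] by (simp add: r_def)

lemma chain_dec:
  fixes a :: "nat \<Rightarrow> int"
  assumes "\<forall>s\<in>{1..<R}. a (s + 1) dvd (a s :: int)" "1 \<le> i" "i \<le> j" "j \<le> R"
  shows "a j dvd a i"
  using assms(3,4)
proof (induction j rule: dec_induct)
  case base then show ?case by simp
next
  case (step k)
  then have "a (Suc k) dvd a k" using assms(1,2) by auto
  then show ?case using step dvd_trans by auto
qed

lemma chain_inc:
  fixes a :: "nat \<Rightarrow> int"
  assumes "\<forall>s\<in>{1..<R}. a s dvd (a (s + 1) :: int)" "1 \<le> i" "i \<le> j" "j \<le> R"
  shows "a i dvd a j"
  using assms(3,4)
proof (induction j rule: dec_induct)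
  case base then show ?case by simp
next
  case (step k)
  then have "a k dvd a (Suc k)" using assms(1,2) by auto
  then show ?case using step dvd_trans by auto
qed

lemma div_dvd_div_lemma:
  fixes b c m :: int
  assumes "b dvd c" "c dvd m" "0 < b" "0 < c"
  shows "(m div c) dvd (m div b)"
proof -
  obtain k where k: "m = c * k" using assms(2) by blast
  obtain l where l: "c = b * l" using assms(1) by blast
  have "m div c = k" using k assms(4) by simp
  moreover have "m div b = l * k" using k l assms(3) by (simp add: mult.assoc)
  ultimately show ?thesis by simp
qed

lemma splines_intro:
  assumes "\<forall>i. i \<notin> {1..n} \<longrightarrow> f i = 0" "\<forall>i\<in>{1..n}. 0 \<le> f i \<and> f i < m"
    "\<And>j k. (j, k) \<in> E \<Longrightarrow> \<exists>c. [f j - f k = c * a (edge_index j k)] (mod m)"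
  shows "f \<in> splines m n E a"
  using assms unfolding splines_def by fast

lemma splines_edge:
  assumes "f \<in> splines m n E a" "(j, k) \<in> E"
  shows "\<exists>c. [f j - f k = c * a (edge_index j k)] (mod m)"
  using assms unfolding splines_def by fast

lemma part1:
  fixes m :: int and n :: nat and a :: "nat \<Rightarrow> int"
  assumes n2: "n \<ge> 2"
    and labels: "\<forall>s\<in>{1..r n}. a s dvd m \<and> 1 < a s \<and> a s < m"
    and chain: "\<forall>s\<in>{1..<r n}. a (s + 1) dvd a s" and a1m: "a 1 dvd m" and ne: "m \<noteq> a 1"
    and E1: "star_hub_first n \<subseteq> E" and E2: "E \<subseteq> complete_edges n"
  shows "min_flow_up_generating_set m n E a (insert (\<lambda>i. if i \<in> {1..n} then 1 else 0)
                 ((\<lambda>j. \<lambda>i. if i = j then a (r (j - 1) + 1) else 0) ` {2..n}))"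
proof -
  have rn: "r n \<ge> 1" using r2 n2 .
  have a1: "1 < a 1" "a 1 < m" using labels rn by auto
  define b where "b j = a (r (j - 1) + 1)" for j
  define one where "one = (\<lambda>i::nat. if i \<in> {1..n} then 1 else (0::int))"
  define gen where "gen k = (if k = 1 then one else (\<lambda>i. if i = k then b k else 0))" for k
  define q where "q = m div a 1"
  have idx: "a (edge_index j k) dvd m \<and> 1 < a (edge_index j k) \<and> a (edge_index j k) < m
     \<and> a (edge_index j k) dvd a 1"
    if "1 \<le> j" "j < k" "k \<le> n" for j k
  proof -
    have "edge_index j k \<in> {1..r n}" using idx_bound[OF that] that unfolding edge_index_def by auto
    then show ?thesis using labels chain_dec[OF chain, of 1 "edge_index j k"] by auto
  qed
  have bj: "1 < b j \<and> b j < m \<and> b j dvd m \<and> b j dvd a 1" if "j \<in> {2..n}" for j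
    using idx[of 1 j] that unfolding b_def edge_index_def by auto
  have mq: "m = a 1 * q" using a1m unfolding q_def by simp
  have q2: "q \<ge> 2"
  proof -
    have "q > 1"
    proof (rule ccontr)
      assume "\<not> q > 1"
      then have "a 1 * q \<le> a 1 * 1" using a1 by (intro mult_left_mono) auto
      then show False using mq a1 by simp
    qed
    then show ?thesis by simp
  qed
  have qm: "q dvd m" using mq by simp
  have bq: "\<forall>j\<in>{2..n}. 0 < b j \<and> b j dvd m \<and> q dvd m div b j \<and> (\<lambda>_. 1::nat) j \<in> {1..n}"
  proof
    fix j assume j: "j \<in> {2..n}"
    have "(m div a 1) dvd (m div b j)" using bj[OF j] a1m a1 by (intro div_dvd_div_lemma) auto
    then show "0 < b j \<and> b j dvd m \<and> q dvd m div b j \<and> (\<lambda>_. 1::nat) j \<in> {1..n}"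
      using bj[OF j] j unfolding q_def by auto
  qed
  have Bset: "insert (\<lambda>i. if i \<in> {1..n} then 1 else 0)
                 ((\<lambda>j. \<lambda>i. if i = j then a (r (j - 1) + 1) else 0) ` {2..n}) = gen ` {1..n}"
  proof -
    have s12: "{1..n} = insert 1 {2..n}" using n2 by auto
    have e1: "gen ` {1..n} = insert (gen 1) (gen ` {2..n})" unfolding s12 by (rule image_insert)
    have g1: "gen 1 = (\<lambda>i. if i \<in> {1..n} then 1 else 0)" by (simp add: gen_def one_def)
    have e2: "gen ` {2..n} = (\<lambda>j. \<lambda>i. if i = j then a (r (j - 1) + 1) else 0) ` {2..n}"
      by (rule image_cong) (auto simp: gen_def b_def)
    show ?thesis unfolding e1 e2 g1 by (rule refl)
  qed
  have genS: "\<forall>k\<in>{1..n}. gen k \<in> splines m n E a"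
  proof
    fix k assume k: "k \<in> {1..n}"
    show "gen k \<in> splines m n E a"
    proof (cases "k = 1")
      case True
      have "\<exists>c. [one j - one l = c * a (edge_index j l)] (mod m)" if "(j, l) \<in> E" for j l
        using that E2 by (intro exI[of _ 0]) (auto simp: complete_edges_def one_def)
      then show ?thesis using True a1 unfolding gen_def by (intro splines_intro) (auto simp: one_def)
    next
      case False
      then have k2: "k \<in> {2..n}" using k by auto
      have "\<exists>c. [gen k j - gen k l = c * a (edge_index j l)] (mod m)" if jl: "(j, l) \<in> E" for j l
      proof (rule dvd_cong_ex)
        have jl': "1 \<le> j" "j < l" "l \<le> n" using jl E2 by (auto simp: complete_edges_def)
        have ed: "a (edge_index j l) dvd a (edge_index 1 k)" if "k = j \<or> k = l"
        proof -
          have "r (k - 1) \<le> r (l - 1)" using that jl' by (intro r_mono) auto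
          then have "r (k - 1) + 1 \<le> r (l - 1) + j" using jl' by linarith
          moreover have "r (l - 1) + j \<le> r n" using idx_bound[OF jl'] .
          ultimately show ?thesis using chain_dec[OF chain, of "r (k - 1) + 1" "r (l - 1) + j"]
            unfolding edge_index_def by auto
        qed
        show "a (edge_index j l) dvd gen k j - gen k l"
          using ed False jl' unfolding gen_def b_def edge_index_def by auto
      qed
      then show ?thesis using False bj[OF k2] k2 unfolding gen_def by (intro splines_intro) auto
    qed
  qed
  have D: "\<forall>g\<in>splines m n E a. \<forall>j\<in>{2..n}. b j dvd g j - g ((\<lambda>_. 1::nat) j)"
  proof (intro ballI)
    fix g j assume g: "g \<in> splines m n E a" and j: "j \<in> {2..n}"
    have "(1, j) \<in> E" using E1 j by (auto simp: star_hub_first_def)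
    then obtain c where "[g 1 - g j = c * a (edge_index 1 j)] (mod m)" using g splines_edge by blast
    then have "b j dvd g 1 - g j" using bj[OF j] cong_dvd_lemma unfolding b_def edge_index_def by auto
    then show "b j dvd g j - g ((\<lambda>_. 1::nat) j)" by (simp add: dvd_diff_commute)
  qed
  have delta: "\<forall>k\<in>{1..n}. \<forall>j\<in>{1..n}. Phi b (\<lambda>_. 1) (gen k) j = (if j = k then 1 else 0)"
  proof -
    have bdiv: "b k div b k = 1" if "Suc 0 \<noteq> k" "Suc 0 \<le> k" "k \<le> n" for k
      using bj[of k] that by auto
    show ?thesis using bdiv by (auto simp: Phi_def gen_def one_def)
  qed
  have span: "\<forall>f\<in>splines m n E a. \<exists>coef. \<forall>i\<in>{1..n}. f i = (\<Sum>k\<in>{1..n}. coef k * gen k i)"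
  proof
    fix f assume f: "f \<in> splines m n E a"
    define coef where "coef k = (if k = 1 then f 1 else (f k - f 1) div b k)" for k
    have "f i = (\<Sum>k\<in>{1..n}. coef k * gen k i)" if i: "i \<in> {1..n}" for i
    proof -
      have "(\<Sum>k\<in>{1..n}. coef k * gen k i) = (\<Sum>k\<in>{1..n}. (if k = 1 then f 1 else 0) + (if k = i then f i - f 1 else 0))"
      proof (rule sum.cong)
        fix k assume k: "k \<in> {1..n}"
        show "coef k * gen k i = (if k = 1 then f 1 else 0) + (if k = i then f i - f 1 else 0)"
        proof (cases "k = 1")
          case False
          then have "k \<in> {2..n}" using k by auto
          then have "b k dvd f k - f 1" using D f by auto
          then have dv: "(f k - f 1) div b k * b k = f k - f 1" by simp
          have k1: "k \<noteq> Suc 0" using False by simp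
          show ?thesis using k1 dv by (cases "i = k") (simp_all add: coef_def gen_def)
        next
          case True
          show ?thesis using i True by (simp add: coef_def gen_def one_def)
        qed
      qed simp
      also have "\<dots> = f i" using i by (simp add: sum.distrib)
      finally show ?thesis by simp
    qed
    then show "\<exists>coef. \<forall>i\<in>{1..n}. f i = (\<Sum>k\<in>{1..n}. coef k * gen k i)" by blast
  qed
  have flow: "\<forall>k\<in>{1..n}. flow_up_class m n E a (gen k)"
  proof
    fix k assume k: "k \<in> {1..n}"
    show "flow_up_class m n E a (gen k)"
      unfolding flow_up_class_def
    proof (intro conjI)
      show "gen k \<in> splines m n E a" using genS k by blast
      show "\<exists>i\<in>{1..n}. gen k i \<noteq> 0 \<and> (\<forall>t\<in>{1..<i}. gen k t = 0)"
        using k bj[of k] by (intro bexI[of _ k]) (auto simp: gen_def one_def)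
    qed
  qed
  have "min_flow_up_generating_set m n E a (gen ` {1..n})"
    by (rule generic_min[OF _ q2 qm bq genS D delta span flow]) (use a1 in auto)
  then show ?thesis using Bset by simp
qed



lemma telescope:
  fixes f :: "nat \<Rightarrow> int"
  shows "i \<ge> 1 \<Longrightarrow> (\<Sum>k\<in>{1..i}. if k = 1 then f 1 else f k - f (k - 1)) = f i"
proof (induction i)
  case 0 then show ?case by simp
next
  case (Suc i)
  show ?case
  proof (cases "i = 0")
    case True then show ?thesis by simp
  next
    case False
    then have "(\<Sum>k\<in>{1..i}. if k = 1 then f 1 else f k - f (k - 1)) = f i" using Suc by simp
    then show ?thesis using False by (simp add: sum.cl_ivl_Suc)
  qed
qed

lemma part2:
  fixes m :: int and n :: nat and a :: "nat \<Rightarrow> int"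
  assumes n2: "n \<ge> 2"
    and labels: "\<forall>s\<in>{1..r n}. a s dvd m \<and> 1 < a s \<and> a s < m"
    and chain: "\<forall>s\<in>{1..<r n}. a s dvd a (s + 1)" and anm: "a (r n) dvd m" and ne: "m \<noteq> a (r n)"
    and E1: "star_hub_last n \<subseteq> E" and E2: "E \<subseteq> complete_edges n"
  shows "min_flow_up_generating_set m n E a (insert (\<lambda>i. if i \<in> {1..n} then 1 else 0)
                 ((\<lambda>j. \<lambda>i. if i \<in> {j..n} then a (r n - (n - j)) else 0) ` {2..n}))"
proof -
  have rn: "r n \<ge> 1" using r2 n2 .
  have an: "1 < a (r n)" "a (r n) < m" using labels rn by auto
  define b where "b j = a (r (n - 1) + j - 1)" for j
  define one where "one = (\<lambda>i::nat. if i \<in> {1..n} then 1 else (0::int))"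
  define gen where "gen k = (if k = 1 then one else (\<lambda>i. if i \<in> {k..n} then b k else 0))" for k
  define q where "q = m div a (r n)"
  have rnn: "r n = r (n - 1) + (n - 1)" using r_pred[of n] n2 by simp
  have idx: "a (edge_index j k) dvd m \<and> 1 < a (edge_index j k) \<and> a (edge_index j k) < m
     \<and> a (edge_index j k) dvd a (r n)"
    if "1 \<le> j" "j < k" "k \<le> n" for j k
  proof -
    have "edge_index j k \<in> {1..r n}" using idx_bound[OF that] that unfolding edge_index_def by auto
    then show ?thesis using labels chain_inc[OF chain, of "edge_index j k" "r n"] by auto
  qed
  have bj: "1 < b j \<and> b j < m \<and> b j dvd m \<and> b j dvd a (r n)" if "j \<in> {2..n}" for j
  proof -
    have "b j = a (edge_index (j - 1) n)" using that unfolding b_def edge_index_def by auto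
    then show ?thesis using idx[of "j - 1" n] that by auto
  qed
  have mq: "m = a (r n) * q" using anm unfolding q_def by simp
  have q2: "q \<ge> 2"
  proof -
    have "q > 1"
    proof (rule ccontr)
      assume "\<not> q > 1"
      then have "a (r n) * q \<le> a (r n) * 1" using an by (intro mult_left_mono) auto
      then show False using mq an by simp
    qed
    then show ?thesis by simp
  qed
  have qm: "q dvd m" using mq by simp
  have bq: "\<forall>j\<in>{2..n}. 0 < b j \<and> b j dvd m \<and> q dvd m div b j \<and> (\<lambda>j. j - 1) j \<in> {1..n}"
  proof
    fix j assume j: "j \<in> {2..n}"
    have "(m div a (r n)) dvd (m div b j)" using bj[OF j] anm an by (intro div_dvd_div_lemma) auto
    then show "0 < b j \<and> b j dvd m \<and> q dvd m div b j \<and> (\<lambda>j. j - 1) j \<in> {1..n}"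
      using bj[OF j] j unfolding q_def by auto
  qed
  have Bset: "insert (\<lambda>i. if i \<in> {1..n} then 1 else 0)
                 ((\<lambda>j. \<lambda>i. if i \<in> {j..n} then a (r n - (n - j)) else 0) ` {2..n}) = gen ` {1..n}"
  proof -
    have s12: "{1..n} = insert 1 {2..n}" using n2 by auto
    have e1: "gen ` {1..n} = insert (gen 1) (gen ` {2..n})" unfolding s12 by (rule image_insert)
    have g1: "gen 1 = (\<lambda>i. if i \<in> {1..n} then 1 else 0)" by (simp add: gen_def one_def)
    have e2: "gen ` {2..n} = (\<lambda>j. \<lambda>i. if i \<in> {j..n} then a (r n - (n - j)) else 0) ` {2..n}"
    proof (rule image_cong)
      fix j assume j: "j \<in> {2..n}"
      have e: "r n - (n - j) = r (n - 1) + j - 1" using rnn j by auto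
      have j1: "j \<noteq> 1" using j by auto
      show "gen j = (\<lambda>i. if i \<in> {j..n} then a (r n - (n - j)) else 0)"
        unfolding e gen_def b_def using j1 by simp
    qed simp
    show ?thesis unfolding e1 e2 g1 by (rule refl)
  qed
  have genS: "\<forall>k\<in>{1..n}. gen k \<in> splines m n E a"
  proof
    fix k assume k: "k \<in> {1..n}"
    show "gen k \<in> splines m n E a"
    proof (cases "k = 1")
      case True
      have "\<exists>c. [one j - one l = c * a (edge_index j l)] (mod m)" if "(j, l) \<in> E" for j l
        using that E2 by (intro exI[of _ 0]) (auto simp: complete_edges_def one_def)
      then show ?thesis using True an unfolding gen_def by (intro splines_intro) (auto simp: one_def)
    next
      case False
      then have k2: "k \<in> {2..n}" using k by auto
      have "\<exists>c. [gen k j - gen k l = c * a (edge_index j l)] (mod m)" if jl: "(j, l) \<in> E" for j l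
      proof (rule dvd_cong_ex)
        have jl': "1 \<le> j" "j < l" "l \<le> n" using jl E2 by (auto simp: complete_edges_def)
        have ed: "a (edge_index j l) dvd b k" if "j < k" "k \<le> l"
        proof -
          have "r (l - 1) \<le> r (n - 1)" using jl' by (intro r_mono) auto
          then have "r (l - 1) + j \<le> r (n - 1) + k - 1" using that by linarith
          moreover have "r (n - 1) + k - 1 \<le> r n" using rnn k by auto
          moreover have "1 \<le> r (l - 1) + j" using jl' by auto
          ultimately show ?thesis using chain_inc[OF chain, of "r (l - 1) + j" "r (n - 1) + k - 1"]
            unfolding edge_index_def b_def by auto
        qed
        show "a (edge_index j l) dvd gen k j - gen k l"
        proof (cases "j < k \<and> k \<le> l")
          case True
          then have "gen k j - gen k l = - b k" using False jl' unfolding gen_def by auto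
          then show ?thesis using ed True by simp
        next
          case F: False
          then have "gen k j - gen k l = 0" using False jl' unfolding gen_def by auto
          then show ?thesis by simp
        qed
      qed
      then show ?thesis using False bj[OF k2] k2 unfolding gen_def by (intro splines_intro) auto
    qed
  qed
  have D: "\<forall>g\<in>splines m n E a. \<forall>j\<in>{2..n}. b j dvd g j - g ((\<lambda>j. j - 1) j)"
  proof (intro ballI)
    fix g j assume g: "g \<in> splines m n E a" and j: "j \<in> {2..n}"
    have e: "a (r (n - 1) + s) dvd g s - g n" if "1 \<le> s" "s < n" for s
    proof -
      have "(s, n) \<in> E" using E1 that by (auto simp: star_hub_last_def)
      then obtain c where "[g s - g n = c * a (edge_index s n)] (mod m)" using g splines_edge by blast
      then show ?thesis using idx[of s n] that cong_dvd_lemma unfolding edge_index_def by auto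
    qed
    have bj': "b j = a (r (n - 1) + (j - 1))" using j unfolding b_def by auto
    show "b j dvd g j - g ((\<lambda>j. j - 1) j)"
    proof (cases "j = n")
      case True
      then have "b j dvd g (j - 1) - g j" using e[of "j - 1"] j bj' by auto
      then show ?thesis by (simp add: dvd_diff_commute)
    next
      case False
      have c1: "a (r (n - 1) + (j - 1)) dvd a (r (n - 1) + j)"
        using chain_inc[OF chain, of "r (n - 1) + (j - 1)" "r (n - 1) + j"] j False rnn by auto
      have c2: "a (r (n - 1) + j) dvd g j - g n" using e[of j] j False by auto
      have "b j dvd g j - g n" unfolding bj' using dvd_trans[OF c1 c2] .
      moreover have "b j dvd g (j - 1) - g n" using e[of "j - 1"] j bj' by auto
      ultimately have "b j dvd (g j - g n) - (g (j - 1) - g n)" by (rule dvd_diff)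
      then show ?thesis by simp
    qed
  qed
  have delta: "\<forall>k\<in>{1..n}. \<forall>j\<in>{1..n}. Phi b (\<lambda>j. j - 1) (gen k) j = (if j = k then 1 else 0)"
  proof (intro ballI)
    fix k j assume k: "k \<in> {1..n}" and j: "j \<in> {1..n}"
    show "Phi b (\<lambda>j. j - 1) (gen k) j = (if j = k then 1 else 0)"
    proof (cases "j = 1")
      case True then show ?thesis using k by (auto simp: Phi_def gen_def one_def)
    next
      case False
      have "gen k j - gen k (j - 1) = (if j = k then b k else 0)"
        using j k False by (auto simp: gen_def one_def)
      moreover have "b k div b k = 1" if "j = k" using bj[of k] that j False by auto
      ultimately show ?thesis using False by (auto simp: Phi_def)
    qed
  qed
  have span: "\<forall>f\<in>splines m n E a. \<exists>coef. \<forall>i\<in>{1..n}. f i = (\<Sum>k\<in>{1..n}. coef k * gen k i)"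
  proof
    fix f assume f: "f \<in> splines m n E a"
    define coef where "coef k = (if k = 1 then f 1 else (f k - f (k - 1)) div b k)" for k
    define d where "d k = (if k = 1 then f 1 else f k - f (k - 1))" for k
    have "f i = (\<Sum>k\<in>{1..n}. coef k * gen k i)" if i: "i \<in> {1..n}" for i
    proof -
      have "(\<Sum>k\<in>{1..n}. coef k * gen k i) = (\<Sum>k\<in>{1..n}. if k \<le> i then d k else 0)"
      proof (rule sum.cong)
        fix k assume k: "k \<in> {1..n}"
        show "coef k * gen k i = (if k \<le> i then d k else 0)"
        proof (cases "k = 1")
          case False
          then have "k \<in> {2..n}" using k by auto
          then have "b k dvd f k - f (k - 1)" using D f by auto
          then have dv: "(f k - f (k - 1)) div b k * b k = f k - f (k - 1)" by simp
          have k1: "k \<noteq> Suc 0" using False by simp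
          show ?thesis using k1 dv i by (cases "k \<le> i") (simp_all add: coef_def gen_def d_def)
        next
          case True
          show ?thesis using i True by (simp add: coef_def gen_def one_def d_def)
        qed
      qed simp
      also have "\<dots> = (\<Sum>k\<in>{k\<in>{1..n}. k \<le> i}. d k)"
        using sum.inter_filter[of "{1..n}" d "\<lambda>k. k \<le> i"] by simp
      also have "{k\<in>{1..n}. k \<le> i} = {1..i}" using i by auto
      also have "(\<Sum>k\<in>{1..i}. d k) = f i" using telescope[of i f] i unfolding d_def by simp
      finally show ?thesis by simp
    qed
    then show "\<exists>coef. \<forall>i\<in>{1..n}. f i = (\<Sum>k\<in>{1..n}. coef k * gen k i)" by blast
  qed
  have flow: "\<forall>k\<in>{1..n}. flow_up_class m n E a (gen k)"
  proof
    fix k assume k: "k \<in> {1..n}"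
    show "flow_up_class m n E a (gen k)"
      unfolding flow_up_class_def
    proof (intro conjI)
      show "gen k \<in> splines m n E a" using genS k by blast
      show "\<exists>i\<in>{1..n}. gen k i \<noteq> 0 \<and> (\<forall>t\<in>{1..<i}. gen k t = 0)"
        using k bj[of k] by (intro bexI[of _ k]) (auto simp: gen_def one_def)
    qed
  qed
  have "min_flow_up_generating_set m n E a (gen ` {1..n})"
    by (rule generic_min[OF _ q2 qm bq genS D delta span flow]) (use an in auto)
  then show ?thesis using Bset by simp
qed


theorem mainTheorem7:
  fixes m :: int and n :: nat and a :: "nat \<Rightarrow> int"
  assumes n2: "n \<ge> 2"
    and labels: "\<forall>s\<in>{1..r n}. a s dvd m \<and> 1 < a s \<and> a s < m"
  shows
   "((\<forall>s\<in>{1..<r n}. a (s + 1) dvd a s) \<and> a 1 dvd m \<and> m \<noteq> a 1 \<longrightarrow>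
      (let B = insert (\<lambda>i. if i \<in> {1..n} then 1 else 0)
                 ((\<lambda>j. \<lambda>i. if i = j then a (r (j - 1) + 1) else 0) ` {2..n})
       in min_flow_up_generating_set m n (complete_edges n) a B \<and>
          (\<forall>H\<in>{wheel_hub_first n, star_hub_first n}.
              min_flow_up_generating_set m n H a B)))
    \<and>
    ((\<forall>s\<in>{1..<r n}. a s dvd a (s + 1)) \<and> a (r n) dvd m \<and> m \<noteq> a (r n) \<longrightarrow>
      (let B = insert (\<lambda>i. if i \<in> {1..n} then 1 else 0)
                 ((\<lambda>j. \<lambda>i. if i \<in> {j..n} then a (r n - (n - j)) else 0) ` {2..n})
       in min_flow_up_generating_set m n (complete_edges n) a B \<and>
          (\<forall>H\<in>{wheel_hub_last n, star_hub_last n}.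
              min_flow_up_generating_set m n H a B)))"
proof -
  have s1: "star_hub_first n \<subseteq> complete_edges n" "wheel_hub_first n \<subseteq> complete_edges n"
    "star_hub_first n \<subseteq> wheel_hub_first n"
    by (auto simp: star_hub_first_def complete_edges_def wheel_hub_first_def)
  have s2: "star_hub_last n \<subseteq> complete_edges n" "wheel_hub_last n \<subseteq> complete_edges n"
    "star_hub_last n \<subseteq> wheel_hub_last n"
    by (auto simp: star_hub_last_def complete_edges_def wheel_hub_last_def)
  show ?thesis
    unfolding Let_def
  proof (intro conjI impI)
    assume h: "(\<forall>s\<in>{1..<r n}. a (s + 1) dvd a s) \<and> a 1 dvd m \<and> m \<noteq> a 1"
    note P = part1[OF n2 labels h[THEN conjunct1] h[THEN conjunct2, THEN conjunct1] h[THEN conjunct2, THEN conjunct2]]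
    show "min_flow_up_generating_set m n (complete_edges n) a (insert (\<lambda>i. if i \<in> {1..n} then 1 else 0)
                 ((\<lambda>j. \<lambda>i. if i = j then a (r (j - 1) + 1) else 0) ` {2..n}))"
      using P[of "complete_edges n"] s1 by simp
    show "\<forall>H\<in>{wheel_hub_first n, star_hub_first n}. min_flow_up_generating_set m n H a (insert (\<lambda>i. if i \<in> {1..n} then 1 else 0)
                 ((\<lambda>j. \<lambda>i. if i = j then a (r (j - 1) + 1) else 0) ` {2..n}))"
      using P[of "wheel_hub_first n"] P[of "star_hub_first n"] s1 by simp
  next
    assume h: "(\<forall>s\<in>{1..<r n}. a s dvd a (s + 1)) \<and> a (r n) dvd m \<and> m \<noteq> a (r n)"
    note P = part2[OF n2 labels h[THEN conjunct1] h[THEN conjunct2, THEN conjunct1] h[THEN conjunct2, THEN conjunct2]]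
    show "min_flow_up_generating_set m n (complete_edges n) a (insert (\<lambda>i. if i \<in> {1..n} then 1 else 0)
                 ((\<lambda>j. \<lambda>i. if i \<in> {j..n} then a (r n - (n - j)) else 0) ` {2..n}))"
      using P[of "complete_edges n"] s2 by simp
    show "\<forall>H\<in>{wheel_hub_last n, star_hub_last n}. min_flow_up_generating_set m n H a (insert (\<lambda>i. if i \<in> {1..n} then 1 else 0)
                 ((\<lambda>j. \<lambda>i. if i \<in> {j..n} then a (r n - (n - j)) else 0) ` {2..n}))"
      using P[of "wheel_hub_last n"] P[of "star_hub_last n"] s2 by simp
  qed
qed

end
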